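(* Let $p\in(0,\frac12)$ and $q=4p(1-p)$. Then $\eta_{KL}(Z(q))=\eta_{KL}(\mathrm{BSC}(p))=(1-2p)^2$, but $Z(q)\not\succeq_{\mathrm{l.n.}}\mathrm{BSC}(p)$.
   Context: For $q\in[0,1]$, the Z-channel $Z(q)$ has input and output alphabet $\{0,1\}$ with $Z(0|0)=1$, $Z(1|0)=0$, $Z(0|1)=q$, $Z(1|1)=1-q$. $\mathrm{BSC}(p)$ is the binary symmetric channel with crossover probability $p$. The KL contraction coefficient is $\eta_{KL}(P)=\sup_{P_X,Q_X}\frac{D(P\circ P_X\|P\circ Q_X)}{D(P_X\|Q_X)}$ (over inputs with $0<D(P_X\|Q_X)<\infty$, $P\circ P_X$ the output distribution). $P\succeq_{\mathrm{l.n.}}Q$ (less noisy) means $I(U:Y)\ge I(U:Y')$ for every finite-alphabet $U$ and every joint $P_{UX}$, with $U-X-Y$ and $U-X-Y'$ Markov chains. *)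

theory Defs
  imports Complex_Main
begin

(* Binary alphabet {0,1} is rendered as bool: False = 0, True = 1.
   A channel K is a transition kernel: K x y = P(Y = y | X = x). *)

type_synonym bchannel = "bool \<Rightarrow> bool \<Rightarrow> real"

definition Zch :: "real \<Rightarrow> bchannel" where
  "Zch q x y = (if \<not> x then (if \<not> y then 1 else 0) else (if \<not> y then q else 1 - q))"

definition BSC :: "real \<Rightarrow> bchannel" where
  "BSC p x y = (if x = y then 1 - p else p)"

definition is_dist :: "(bool \<Rightarrow> real) \<Rightarrow> bool" where
  "is_dist P \<longleftrightarrow> (\<forall>x. P x \<ge> 0) \<and> (\<Sum>x\<in>UNIV. P x) = 1"

definition outd :: "bchannel \<Rightarrow> (bool \<Rightarrow> real) \<Rightarrow> (bool \<Rightarrow> real)" where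
  "outd K P y = (\<Sum>x\<in>UNIV. P x * K x y)"

(* KL divergence (natural log), with convention 0 log(0/q) = 0; it is finite iff supp P \<subseteq> supp Q *)
definition kl_finite :: "(bool \<Rightarrow> real) \<Rightarrow> (bool \<Rightarrow> real) \<Rightarrow> bool" where
  "kl_finite P Q \<longleftrightarrow> (\<forall>x. P x > 0 \<longrightarrow> Q x > 0)"

definition kl :: "(bool \<Rightarrow> real) \<Rightarrow> (bool \<Rightarrow> real) \<Rightarrow> real" where
  "kl P Q = (\<Sum>x\<in>UNIV. if P x = 0 then 0 else P x * ln (P x / Q x))"

definition eta_KL :: "bchannel \<Rightarrow> real" where
  "eta_KL K = Sup {kl (outd K P) (outd K Q) / kl P Q | P Q.
      is_dist P \<and> is_dist Q \<and> kl_finite P Q \<and> kl P Q > 0}"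

definition mutual_info :: "'a set \<Rightarrow> 'b set \<Rightarrow> ('a \<Rightarrow> 'b \<Rightarrow> real) \<Rightarrow> real" where
  "mutual_info A B J = (\<Sum>a\<in>A. \<Sum>b\<in>B.
      if J a b = 0 then 0
      else J a b * ln (J a b / ((\<Sum>b'\<in>B. J a b') * (\<Sum>a'\<in>A. J a' b))))"

definition is_joint_UX :: "nat \<Rightarrow> (nat \<Rightarrow> bool \<Rightarrow> real) \<Rightarrow> bool" where
  "is_joint_UX n J \<longleftrightarrow> (\<forall>u x. J u x \<ge> 0) \<and> (\<Sum>u<n. \<Sum>x\<in>UNIV. J u x) = 1"

(* joint P_{UY} under U - X - Y Markov chain with Y = K(X) *)
definition joint_UY :: "bchannel \<Rightarrow> (nat \<Rightarrow> bool \<Rightarrow> real) \<Rightarrow> nat \<Rightarrow> bool \<Rightarrow> real" where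
  "joint_UY K J u y = (\<Sum>x\<in>UNIV. J u x * K x y)"

definition less_noisy :: "bchannel \<Rightarrow> bchannel \<Rightarrow> bool" where
  "less_noisy P Q \<longleftrightarrow> (\<forall>n J. is_joint_UX n J \<longrightarrow>
      mutual_info {..<n} UNIV (joint_UY P J) \<ge> mutual_info {..<n} UNIV (joint_UY Q J))"

end

theory Submission
  imports Defs
begin

lemma sum_bool: "(\<Sum>x\<in>(UNIV::bool set). f x) = f False + f True"
  by (simp add: UNIV_bool)

lemma dist_bool: "is_dist P \<Longrightarrow> P False = 1 - P True \<and> 0 \<le> P True \<and> P True \<le> 1"
  unfolding is_dist_def sum_bool by (metis add_le_cancel_left add.right_neutral diff_eq_eq add.commute)

lemma kl_bool: "kl P Q = P False * ln (P False / Q False) + P True * ln (P True / Q True)"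
  unfolding kl_def sum_bool by simp

lemma outd_bool: "outd K P y = P False * K False y + P True * K True y"
  unfolding outd_def sum_bool by simp

lemma logsum:
  fixes a b q :: real
  assumes "a \<ge> 0" "b \<ge> 0" "a > 0 \<longrightarrow> b > 0" "q > 0"
  shows "(a+q)*ln((a+q)/(b+q)) \<le> a*ln(a/b)"
proof (cases "a = 0")
  case True
  then show ?thesis using assms by (simp add: mult_nonneg_nonpos)
next
  case False
  then have a: "a > 0" "b > 0" using assms by auto
  have e1: "ln ((a+q)*b/((b+q)*a)) \<le> (a+q)*b/((b+q)*a) - 1"
    by (rule ln_le_minus_one) (use a assms in auto)
  have e2: "ln ((a+q)/(b+q)) \<le> (a+q)/(b+q) - 1"
    by (rule ln_le_minus_one) (use a assms in auto)
  have sp: "ln ((a+q)/(b+q)) = ln ((a+q)*b/((b+q)*a)) + ln (a/b)"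
    using a assms by (simp add: ln_div ln_mult)
  have "(a+q)*ln((a+q)/(b+q)) - a*ln(a/b) = a * ln ((a+q)*b/((b+q)*a)) + q * ln ((a+q)/(b+q))"
    using sp by (simp add: algebra_simps)
  also have "\<dots> \<le> a * ((a+q)*b/((b+q)*a) - 1) + q * ((a+q)/(b+q) - 1)"
    using e1 e2 a assms by (intro add_mono mult_left_mono) auto
  also have "\<dots> = (a+q)*b/(b+q) + q*(a+q)/(b+q) - (a+q)"
  proof -
    have "a * ((a+q)*b/((b+q)*a)) = (a+q)*b/(b+q)" using a by simp
    moreover have "q * ((a+q)/(b+q)) = q*(a+q)/(b+q)" by simp
    ultimately show ?thesis by (simp add: algebra_simps)
  qed
  also have "\<dots> = ((a+q)*b + q*(a+q))/(b+q) - (a+q)" by (simp add: add_divide_distrib)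
  also have "\<dots> = 0"
  proof -
    have bq: "b + q \<noteq> 0" using a assms by simp
    have "(a+q)*b + q*(a+q) = (a+q)*(b+q)" by (simp add: algebra_simps)
    then show ?thesis using bq by simp
  qed
  finally show ?thesis by simp
qed

lemma Z_upper:
  assumes q: "0 < q" "q < 1" and P: "is_dist P" and Q: "is_dist Q" and f: "kl_finite P Q"
  shows "kl (outd (Zch q) P) (outd (Zch q) Q) \<le> (1-q) * kl P Q"
proof -
  obtain a b where a: "P True = a" "P False = 1 - a" "0 \<le> a" "a \<le> 1"
    using dist_bool[OF P] by auto
  obtain c d where b: "Q True = c" "Q False = 1 - c" "0 \<le> c" "c \<le> 1"
    using dist_bool[OF Q] by auto
  have f0: "1 - a > 0 \<longrightarrow> 1 - c > 0" using f a b unfolding kl_finite_def by metis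
  have o1: "outd (Zch q) P False = (1-q)*(1-a) + q" "outd (Zch q) P True = (1-q)*a"
    "outd (Zch q) Q False = (1-q)*(1-c) + q" "outd (Zch q) Q True = (1-q)*c"
    unfolding outd_bool Zch_def using a b by (auto simp: algebra_simps)
  have t2: "(1-q)*a * ln ((1-q)*a / ((1-q)*c)) = (1-q) * (a * ln (a/c))"
    using q by simp
  have t1: "((1-q)*(1-a) + q) * ln (((1-q)*(1-a) + q) / ((1-q)*(1-c) + q))
     \<le> ((1-q)*(1-a)) * ln (((1-q)*(1-a)) / ((1-q)*(1-c)))"
    by (rule logsum) (use q a b f0 in auto)
  have t1': "((1-q)*(1-a)) * ln (((1-q)*(1-a)) / ((1-q)*(1-c))) = (1-q) * ((1-a) * ln ((1-a)/(1-c)))"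
    using q by simp
  show ?thesis unfolding kl_bool o1 a(1,2) b(1,2) distrib_left using t1 t1' t2 by linarith
qed

lemma xlnx_tendsto: "((\<lambda>x::real. x * ln x) \<longlongrightarrow> 0) (at_right 0)"
proof (rule metric_tendsto_imp_tendsto)
  show "\<forall>\<^sub>F x in at_right 0. dist (x * ln x) 0 \<le> dist (2 * sqrt x) 0"
  proof -
    have "norm (x * ln x) \<le> 2 * sqrt x" if "0 < x" "x < 1" for x::real
    proof -
      have s: "0 < sqrt x" using that by simp
      have "ln (1/sqrt x) \<le> 1/sqrt x - 1" by (rule ln_le_minus_one) (use s in simp)
      moreover have "ln (1/sqrt x) = - ln x / 2" using that by (simp add: ln_div ln_sqrt)
      ultimately have "- ln x \<le> 2 / sqrt x" by (simp add: field_simps)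
      moreover have "ln x \<le> 0" using that by simp
      ultimately have "norm (x * ln x) \<le> x * (2 / sqrt x)"
      proof -
        assume h1: "- ln x \<le> 2 / sqrt x" and h2: "ln x \<le> 0"
        have "norm (x * ln x) = x * (- ln x)" using that h2 by (simp add: abs_mult)
        also have "\<dots> \<le> x * (2 / sqrt x)" using h1 that by (intro mult_left_mono) auto
        finally show ?thesis .
      qed
      also have "x * (2 / sqrt x) = 2 * sqrt x" using that
        by (metis real_div_sqrt times_divide_eq_right mult.commute order.strict_implies_order)
      finally show ?thesis .
    qed
    then show ?thesis
      by (auto simp: eventually_at_right_field dist_norm intro!: exI[of _ 1])
  qed
  show "((\<lambda>x. 2 * sqrt x) \<longlongrightarrow> 0) (at_right (0::real))"
  proof -
    have "((\<lambda>x. 2 * sqrt x) \<longlongrightarrow> 2 * sqrt 0) (at_right (0::real))"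
      by (intro tendsto_intros tendsto_within_subset[OF tendsto_ident_at]) auto
    then show ?thesis by simp
  qed
qed
lemma xlnx_cont: "continuous_on {0..} (\<lambda>x::real. x * ln x)"
proof -
  have "continuous (at x within {0..}) (\<lambda>x::real. x * ln x)" if "x \<ge> 0" for x
  proof (cases "x = 0")
    case True
    have "((\<lambda>x::real. x * ln x) \<longlongrightarrow> 0) (at_right 0)" by (rule xlnx_tendsto)
    then show ?thesis using True by (simp add: continuous_within at_within_Ici_at_right)
  next
    case False
    then have "x > 0" using that by simp
    then have "isCont (\<lambda>x::real. x * ln x) x" by (auto intro!: continuous_intros)
    then show ?thesis using continuous_at_imp_continuous_at_within by blast
  qed
  then show ?thesis by (simp add: continuous_on_eq_continuous_within)
qed

lemma xlnx_der: "x > 0 \<Longrightarrow> DERIV (\<lambda>x::real. x * ln x) x :> ln x + 1"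
  by (auto intro!: derivative_eq_intros)

lemma BSC_core:
  fixes p a b :: real
  assumes p: "0 < p" "p < 1/2" and b: "0 < b" "b < 1" and a: "0 \<le> a" "a \<le> 1"
  shows "(p + (1-2*p)*a)*(ln(p+(1-2*p)*a) - ln(p+(1-2*p)*b))
       + (1-(p+(1-2*p)*a))*(ln(1-(p+(1-2*p)*a)) - ln(1-(p+(1-2*p)*b)))
     \<le> (1-2*p)^2*(a*(ln a - ln b) + (1-a)*(ln(1-a) - ln(1-b)))"
proof -
  define c where "c = 1 - 2*p"
  have c: "0 < c" "c < 1" using p by (auto simp: c_def)
  define X where "X x = p + c*x" for x
  have X: "0 < X x" "X x < 1" if "0 \<le> x" "x \<le> 1" for x
  proof -
    have "c*x \<ge> 0" "c * x \<le> c" using that c by (auto intro: mult_left_le)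
    then show "0 < X x" "X x < 1" using p c_def unfolding X_def by linarith+
  qed
  define k where "k x = c*(ln x - ln(1-x)) - (ln(X x) - ln(1 - X x))" for x
  have kder: "DERIV k x :> c*(1/x + 1/(1-x)) - c*(1/X x + 1/(1-X x))" if "0 < x" "x < 1" for x
  proof -
    have "0 < X x" "X x < 1" using X that by auto
    then show ?thesis using that unfolding k_def[abs_def] X_def
      apply -
      apply (rule derivative_eq_intros refl | simp)+
      apply (simp add: distrib_left)
      done
  qed
  have kdnn: "c*(1/x + 1/(1-x)) - c*(1/X x + 1/(1-X x)) \<ge> 0" if "0 < x" "x < 1" for x
  proof -
    have Xx: "0 < X x" "X x < 1" using X that by auto
    have "X x * (1 - X x) - x*(1-x) = p*(1-p)*(1-2*x)^2" unfolding X_def c_def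
      by (simp add: algebra_simps power2_eq_square)
    moreover have "p*(1-p)*(1-2*x)^2 \<ge> 0" using p by (intro mult_nonneg_nonneg) auto
    ultimately have le: "x*(1-x) \<le> X x * (1 - X x)" by linarith
    have e1: "1/x + 1/(1-x) = 1/(x*(1-x))" using that by (simp add: field_simps)
    have e2: "1/X x + 1/(1-X x) = 1/(X x*(1-X x))" using Xx by (simp add: field_simps)
    have "1/(X x*(1-X x)) \<le> 1/(x*(1-x))"
    proof (rule divide_left_mono)
      have h1: "0 < x*(1-x)" using that by simp
      then have h2: "0 < X x * (1 - X x)" using le by linarith
      show "0 < X x * (1 - X x) * (x * (1 - x))" by (rule mult_pos_pos[OF h2 h1])
    qed (use le in auto)
    then have "c*(1/(X x*(1-X x))) \<le> c*(1/(x*(1-x)))" using c by (intro mult_left_mono) auto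
    then show ?thesis unfolding e1 e2 by simp
  qed
  have kmono: "k x \<le> k y" if "0 < x" "x \<le> y" "y < 1" for x y
  proof (rule DERIV_nonneg_imp_increasing_open[OF that(2)])
    show "\<exists>d. DERIV k z :> d \<and> 0 \<le> d" if "x < z" "z < y" for z
      using kder kdnn that \<open>0<x\<close> \<open>y<1\<close> by (meson less_trans)
    show "continuous_on {x..y} k"
      by (rule continuous_at_imp_continuous_on)
        (use kder that in \<open>meson DERIV_isCont atLeastAtMost_iff less_le_trans le_less_trans\<close>)
  qed
  define f where "f x = c^2*(x*ln x + (1-x)*ln(1-x) - x*ln b - (1-x)*ln(1-b))
     - (X x*ln(X x) + (1-X x)*ln(1-X x) - X x * ln (X b) - (1 - X x) * ln (1 - X b))" for x
  have fder: "DERIV f x :> c*(k x - k b)" if "0 < x" "x < 1" for x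
  proof -
    have "0 < X x" "X x < 1" using X that by auto
    then have "DERIV f x :> c^2*((ln x + 1) + (-1)*(ln(1-x)+1) - ln b + ln(1-b))
       - (c*(ln (X x) + 1) + (-c)*(ln(1-X x) + 1) - c* ln (X b) + c * ln (1 - X b))"
      using that unfolding f_def[abs_def] X_def
      apply -
      apply (rule derivative_eq_intros refl | simp)+
      apply (simp add: algebra_simps)
      done
    moreover have "c^2*((ln x + 1) + (-1)*(ln(1-x)+1) - ln b + ln(1-b))
       - (c*(ln (X x) + 1) + (-c)*(ln(1-X x) + 1) - c* ln (X b) + c * ln (1 - X b)) = c*(k x - k b)"
      unfolding k_def by (simp add: algebra_simps power2_eq_square)
    ultimately show ?thesis by simp
  qed
  have fcont: "continuous_on {0..1} f"
  proof -
    have c1: "continuous_on {0..1} (\<lambda>x::real. x * ln x)"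
      using xlnx_cont by (rule continuous_on_subset) auto
    have c2: "continuous_on {0..1} (\<lambda>x::real. (1-x) * ln (1-x))"
      by (rule continuous_on_compose2[OF xlnx_cont]) (auto intro!: continuous_intros)
    have c3: "continuous_on {0..1} (\<lambda>x. X x*ln(X x) + (1-X x)*ln(1-X x))"
    proof -
      have Xp: "p + c*x \<noteq> 0" "p + c*x \<noteq> 1" if "0 \<le> x" "x \<le> 1" for x
        using X[OF that] unfolding X_def by auto
      show ?thesis unfolding X_def
        apply (intro continuous_intros)
        using Xp by auto
    qed
    show ?thesis unfolding f_def using c1 c2 c3 unfolding X_def
      by (auto intro!: continuous_intros)
  qed
  have fb: "f b = 0" unfolding f_def by (simp add: algebra_simps)
  have "f a \<ge> 0"
  proof (cases "a \<le> b")
    case True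
    have "f a \<ge> f b"
    proof (rule DERIV_nonpos_imp_decreasing_open[of a b f, OF True])
      show "\<exists>d. DERIV f z :> d \<and> d \<le> 0" if "a < z" "z < b" for z
      proof -
        have "k z \<le> k b" using kmono[of z b] that a b by auto
        then show ?thesis using fder[of z] that a b c by (auto intro!: exI[of _ "c*(k z - k b)"] simp: mult_nonneg_nonpos)
      qed
      show "continuous_on {a..b} f" using fcont by (rule continuous_on_subset) (use a b in auto)
    qed
    then show ?thesis using fb by simp
  next
    case False
    have "f b \<le> f a"
    proof (rule DERIV_nonneg_imp_increasing_open[of b a f])
      show "b \<le> a" using False by simp
      show "\<exists>d. DERIV f z :> d \<and> d \<ge> 0" if "b < z" "z < a" for z
      proof -
        have "k b \<le> k z" using kmono[of b z] that a b by auto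
        then show ?thesis using fder[of z] that a b c by (auto intro!: exI[of _ "c*(k z - k b)"])
      qed
      show "continuous_on {b..a} f" using fcont by (rule continuous_on_subset) (use a b in auto)
    qed
    then show ?thesis using fb by simp
  qed
  then show ?thesis unfolding f_def X_def c_def[symmetric] by (simp add: algebra_simps)
qed


lemma xln_div: "0 \<le> x \<Longrightarrow> 0 < (y::real) \<Longrightarrow> x * ln (x/y) = x * (ln x - ln y)"
  by (cases "x = 0") (auto simp: ln_div)

lemma BSC_upper:
  assumes p: "0 < p" "p < 1/2" and P: "is_dist P" and Q: "is_dist Q" and f: "kl_finite P Q"
    and pos: "kl P Q > 0"
  shows "kl (outd (BSC p) P) (outd (BSC p) Q) \<le> (1-2*p)^2 * kl P Q"
proof -
  obtain a where a: "P True = a" "P False = 1 - a" "0 \<le> a" "a \<le> 1"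
    using dist_bool[OF P] by auto
  obtain b where b: "Q True = b" "Q False = 1 - b" "0 \<le> b" "b \<le> 1"
    using dist_bool[OF Q] by auto
  have f1: "a > 0 \<longrightarrow> b > 0" "1 - a > 0 \<longrightarrow> 1 - b > 0" using f a b unfolding kl_finite_def by metis+
  have b0: "b \<noteq> 0"
  proof
    assume "b = 0"
    then have "a = 0" using f1 a by auto
    then show False using pos \<open>b = 0\<close> a b unfolding kl_bool by simp
  qed
  have b1: "b \<noteq> 1"
  proof
    assume "b = 1"
    then have "a = 1" using f1 a by auto
    then show False using pos \<open>b = 1\<close> a b unfolding kl_bool by simp
  qed
  have bb: "0 < b" "b < 1" using b b0 b1 by auto
  define c where "c = 1 - 2*p"
  have o1: "outd (BSC p) P True = p + c*a" "outd (BSC p) P False = 1 - (p + c*a)"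
     "outd (BSC p) Q True = p + c*b" "outd (BSC p) Q False = 1 - (p + c*b)"
    unfolding outd_bool BSC_def c_def a(1,2) b(1,2) by (auto simp: algebra_simps)
  have X: "0 < p + c*x" "p + c*x < 1" if "0 \<le> x" "x \<le> 1" for x
  proof -
    have "c*x \<ge> 0" "c * x \<le> c" using that p by (auto simp: c_def intro: mult_left_le)
    then show "0 < p + c*x" "p + c*x < 1" using p c_def by linarith+
  qed
  have k1: "kl P Q = a*(ln a - ln b) + (1-a)*(ln(1-a) - ln(1-b))"
    unfolding kl_bool a b using a bb by (simp add: xln_div)
  have k2: "kl (outd (BSC p) P) (outd (BSC p) Q) = (p + c*a)*(ln(p+c*a) - ln(p+c*b))
       + (1-(p+c*a))*(ln(1-(p+c*a)) - ln(1-(p+c*b)))"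
    unfolding kl_bool o1 using X[of a] X[of b] a bb by (simp add: xln_div add.commute)
  show ?thesis unfolding k1 k2 c_def using BSC_core[OF p bb a(3,4)] by simp
qed

lemma ln_h_der: "x > 0 \<Longrightarrow> DERIV (\<lambda>x::real. ln x - 2*(x-1)/(x+1)) x :> 1/x - 4/(x+1)^2"
proof -
  assume x: "x > 0"
  have h: "x + 1 \<noteq> 0" using x by simp
  have "DERIV (\<lambda>x::real. ln x - 2*(x-1)/(x+1)) x :> 1/x - (2*(x+1) - 2*(x-1)*1)/((x+1)*(x+1))"
    using x h apply -
    apply (rule derivative_eq_intros refl | simp)+
    done
  moreover have "(2*(x+1) - 2*(x-1)*1)/((x+1)*(x+1)) = 4/(x+1)^2"
    by (simp add: power2_eq_square algebra_simps)
  ultimately show ?thesis by simp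
qed

lemma ln_h_nonneg: "x > 0 \<Longrightarrow> 1/x - 4/(x+1)^2 \<ge> (0::real)"
proof -
  assume x: "x > 0"
  have h: "x + 1 \<noteq> 0" using x by simp
  have "1/x - 4/(x+1)^2 = (x-1)^2/(x*(x+1)^2)" using x h by (simp add: field_simps) (simp add: power2_eq_square algebra_simps)
  also have "\<dots> \<ge> 0" using x by simp
  finally show ?thesis .
qed

lemma ln_h_cont: "0 < a \<Longrightarrow> continuous_on {a..b} (\<lambda>x::real. ln x - 2*(x-1)/(x+1))"
  apply (rule continuous_at_imp_continuous_on)
  apply (rule ballI)
  apply (rule DERIV_isCont)
  apply (rule ln_h_der)
  apply simp
  done

lemma ln_ge1: "1 \<le> x \<Longrightarrow> 2*(x-1)/(x+1) \<le> ln (x::real)"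
proof -
  assume x: "1 \<le> x"
  have "(\<lambda>x::real. ln x - 2*(x-1)/(x+1)) 1 \<le> (\<lambda>x. ln x - 2*(x-1)/(x+1)) x"
  proof (rule DERIV_nonneg_imp_increasing_open[OF x])
    show "continuous_on {1..x} (\<lambda>x::real. ln x - 2*(x-1)/(x+1))" using ln_h_cont by simp
    show "\<exists>y. DERIV (\<lambda>x::real. ln x - 2*(x-1)/(x+1)) z :> y \<and> 0 \<le> y" if "1 < z" "z < x" for z
      using ln_h_der[of z] ln_h_nonneg[of z] that x by auto
  qed
  then show ?thesis by simp
qed

lemma ln_le1: "0 < x \<Longrightarrow> x \<le> 1 \<Longrightarrow> ln (x::real) \<le> 2*(x-1)/(x+1)"
proof -
  assume x: "0 < x" "x \<le> 1"
  have "(\<lambda>x::real. ln x - 2*(x-1)/(x+1)) x \<le> (\<lambda>x. ln x - 2*(x-1)/(x+1)) 1"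
  proof (rule DERIV_nonneg_imp_increasing_open[OF x(2)])
    show "continuous_on {x..1} (\<lambda>x::real. ln x - 2*(x-1)/(x+1))" using ln_h_cont x(1) by blast
    show "\<exists>y. DERIV (\<lambda>x::real. ln x - 2*(x-1)/(x+1)) z :> y \<and> 0 \<le> y" if "x < z" "z < 1" for z
      using ln_h_der[of z] ln_h_nonneg[of z] that x by auto
  qed
  then show ?thesis by simp
qed

lemma ln_g_der: "x > 0 \<Longrightarrow> DERIV (\<lambda>x::real. (x - 1/x)/2 - ln x) x :> (1 + 1/x^2)/2 - 1/x"
  apply (rule derivative_eq_intros refl | simp)+
  apply (simp add: field_simps power2_eq_square)
  done

lemma ln_g_nonneg: "x > 0 \<Longrightarrow> (1 + 1/x^2)/2 - 1/x \<ge> (0::real)"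
proof -
  assume x: "x > 0"
  have "(1 + 1/x^2)/2 - 1/x = (x-1)^2/(2*x^2)" using x by (simp add: field_simps power2_eq_square)
  also have "\<dots> \<ge> 0" using x by simp
  finally show ?thesis .
qed

lemma ln_ge1_upper: "1 \<le> x \<Longrightarrow> ln (x::real) \<le> (x - 1/x)/2"
proof -
  assume x: "1 \<le> x"
  have "(\<lambda>x::real. (x - 1/x)/2 - ln x) 1 \<le> (\<lambda>x. (x - 1/x)/2 - ln x) x"
  proof (rule DERIV_nonneg_imp_increasing_open[OF x])
    show "continuous_on {1..x} (\<lambda>x::real. (x - 1/x)/2 - ln x)"
      by (rule continuous_at_imp_continuous_on) (auto intro: DERIV_isCont[OF ln_g_der])
  qed (use ln_g_der ln_g_nonneg in force)
  then show ?thesis by simp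
qed

lemma G_lower:
  assumes "0 < v" "v < (1::real)"
  shows "v^2/(2+v) + v^2/2 \<le> (1+v)*ln(1+v) + (1-v)*ln(1-v)"
proof -
  have l1: "(1+v)*(2*((1+v)-1)/((1+v)+1)) \<le> (1+v)*ln(1+v)"
    using ln_ge1[of "1+v"] assms by (intro mult_left_mono) auto
  have l2: "ln (1/(1-v)) \<le> (1/(1-v) - 1/(1/(1-v)))/2"
    using ln_ge1_upper[of "1/(1-v)"] assms by simp
  have l2': "ln (1-v) = - ln (1/(1-v))" using assms by (simp add: ln_div)
  have l3': "(1-v)*ln (1/(1-v)) \<le> (1-v)*((1/(1-v) - 1/(1/(1-v)))/2)"
    using l2 assms by (intro mult_left_mono) auto
  have l3: "-(1-v)*((1/(1-v) - 1/(1/(1-v)))/2) \<le> (1-v)*ln(1-v)"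
    unfolding l2' mult_minus_right minus_mult_left using l3' by linarith
  have e1: "(1+v)*(2*((1+v)-1)/((1+v)+1)) = 2*v*(1+v)/(2+v)" by (simp add: algebra_simps)
  have e2: "-(1-v)*((1/(1-v) - 1/(1/(1-v)))/2) = -(1 - (1-v)^2)/2"
    using assms by (simp add: field_simps power2_eq_square)
  have e3: "2*v*(1+v)/(2+v) - (1 - (1-v)^2)/2 = v^2/(2+v) + v^2/2"
    using assms by (simp add: field_simps power2_eq_square)
  show ?thesis using l1 l3 e1 e2 e3 by linarith
qed

lemma G_upper:
  assumes "0 < v" "v < (1::real)"
  shows "(1+v)*ln(1+v) + (1-v)*ln(1-v) \<le> v^2/(2-v) + v^2/2"
proof -
  have l1: "(1+v)*ln(1+v) \<le> (1+v)*(((1+v) - 1/(1+v))/2)"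
    using ln_ge1_upper[of "1+v"] assms by (intro mult_left_mono) auto
  have l2: "(1-v)*ln(1-v) \<le> (1-v)*(2*((1-v)-1)/((1-v)+1))"
    using ln_le1[of "1-v"] assms by (intro mult_left_mono) auto
  have e1: "(1+v)*(((1+v) - 1/(1+v))/2) = v + v^2/2"
    using assms by (simp add: field_simps power2_eq_square)
  have e2: "(1-v)*(2*((1-v)-1)/((1-v)+1)) = -2*v*(1-v)/(2-v)"
    using assms by (simp add: field_simps)
  have e3: "v + v^2/2 - 2*v*(1-v)/(2-v) = v^2/(2-v) + v^2/2"
    using assms by (simp add: field_simps power2_eq_square)
  show ?thesis using l1 l2 e1 e2 e3 by linarith
qed


lemma sup_eq:
  fixes X :: "real set"
  assumes ub: "\<And>x. x \<in> X \<Longrightarrow> x \<le> a" and ap: "\<And>e. e > 0 \<Longrightarrow> \<exists>x\<in>X. a - e < x"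
  shows "Sup X = a"
proof (rule cSup_eq_non_empty)
  show "X \<noteq> {}" using ap[of 1] by auto
  show "x \<le> a" if "x \<in> X" for x using ub that .
  show "a \<le> y" if h: "\<And>x. x \<in> X \<Longrightarrow> x \<le> y" for y
  proof (rule ccontr)
    assume "\<not> a \<le> y"
    then obtain x where "x \<in> X" "a - (a - y) < x" using ap[of "a - y"] by auto
    then show False using h[of x] by auto
  qed
qed

lemma Z_lower:
  assumes q: "0 < q" "q < 1" and N: "N > 0"
  shows "\<exists>P Q. is_dist P \<and> is_dist Q \<and> kl_finite P Q \<and> kl P Q > 0 \<and>
     (1-q) + q * ln q / N \<le> kl (outd (Zch q) P) (outd (Zch q) Q) / kl P Q"
proof -
  define t where "t = exp (-N)"
  have t: "0 < t" "t < 1" using N by (auto simp: t_def)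
  define P :: "bool \<Rightarrow> real" where "P x = (if x then 1 else 0)" for x
  define Q :: "bool \<Rightarrow> real" where "Q x = (if x then t else 1 - t)" for x
  have dP: "is_dist P" unfolding is_dist_def sum_bool P_def by simp
  have dQ: "is_dist Q" unfolding is_dist_def sum_bool Q_def using t by simp
  have fPQ: "kl_finite P Q" unfolding kl_finite_def P_def Q_def using t by auto
  have lnt: "ln (1/t) = N" proof -
    have "1/t = exp N" unfolding t_def by (metis exp_minus inverse_inverse_eq inverse_eq_divide)
    then show ?thesis by simp
  qed
  have klPQ: "kl P Q = N" unfolding kl_bool P_def Q_def using lnt by simp
  define d where "d = (1 - t) + t*q"
  have d: "0 < d" "d \<le> 1" unfolding d_def using t q
    by (auto simp: algebra_simps) (smt (verit) mult_pos_pos mult_left_le)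
  have o: "outd (Zch q) P False = q" "outd (Zch q) P True = 1 - q"
    "outd (Zch q) Q False = d" "outd (Zch q) Q True = t*(1-q)"
    unfolding outd_bool Zch_def P_def Q_def d_def by (auto simp: algebra_simps)
  have k2: "kl (outd (Zch q) P) (outd (Zch q) Q) = q * ln (q/d) + (1-q)*N"
  proof -
    have "(1-q)/(t*(1-q)) = 1/t" using q by simp
    then show ?thesis unfolding kl_bool o using lnt q by simp
  qed
  have "ln (q/d) \<ge> ln q" using d q by (simp add: ln_div)
  then have "q * ln q \<le> q * ln (q/d)" using q by (intro mult_left_mono) auto
  then have "(1-q) + q * ln q / N \<le> (q * ln (q/d) + (1-q)*N) / N"
    using N by (simp add: field_simps)
  then show ?thesis using dP dQ fPQ klPQ k2 N by (intro exI[of _ P] exI[of _ Q]) auto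
qed


lemma BSC_lower:
  assumes p: "0 < p" "p < 1/2" and u: "0 < u" "u < 1"
  shows "\<exists>P Q. is_dist P \<and> is_dist Q \<and> kl_finite P Q \<and> kl P Q > 0 \<and>
     (1-2*p)^2 * (1 - u/2) \<le> kl (outd (BSC p) P) (outd (BSC p) Q) / kl P Q"
proof -
  define c where "c = 1 - 2*p"
  have c: "0 < c" "c < 1" using p by (auto simp: c_def)
  define P :: "bool \<Rightarrow> real" where "P x = (if x then (1+u)/2 else (1-u)/2)" for x
  define Q :: "bool \<Rightarrow> real" where "Q x = 1/2" for x
  have dP: "is_dist P" unfolding is_dist_def sum_bool P_def using u by (auto simp: field_simps)
  have dQ: "is_dist Q" unfolding is_dist_def sum_bool Q_def by simp
  have fPQ: "kl_finite P Q" unfolding kl_finite_def Q_def by simp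
  define G where "G v = (1+v)*ln(1+v) + (1-v)*ln(1-v)" for v :: real
  have klPQ: "kl P Q = G u / 2"
  proof -
    have "kl P Q = (1-u)/2 * ln((1-u)/2/(1/2)) + (1+u)/2 * ln((1+u)/2/(1/2))"
      unfolding kl_bool P_def Q_def by simp
    also have "(1-u)/2/(1/2) = 1-u" by simp
    also have "(1+u)/2/(1/2) = 1+u" by simp
    finally show ?thesis unfolding G_def by (simp add: field_simps)
  qed
  have o: "outd (BSC p) P True = (1 + c*u)/2" "outd (BSC p) P False = (1 - c*u)/2"
    "outd (BSC p) Q True = 1/2" "outd (BSC p) Q False = 1/2"
    unfolding outd_bool BSC_def P_def Q_def c_def by (auto simp: field_simps)
  have klo: "kl (outd (BSC p) P) (outd (BSC p) Q) = G (c*u) / 2"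
  proof -
    have "kl (outd (BSC p) P) (outd (BSC p) Q) = (1-c*u)/2 * ln((1-c*u)/2/(1/2)) + (1+c*u)/2 * ln((1+c*u)/2/(1/2))"
      unfolding kl_bool o by simp
    also have "(1-c*u)/2/(1/2) = 1-c*u" by simp
    also have "(1+c*u)/2/(1/2) = 1+c*u" by simp
    finally show ?thesis unfolding G_def by (simp add: field_simps)
  qed
  have cu: "0 < c*u" "c*u \<le> u" using c u by (auto intro: mult_left_le_one_le)
  have A: "(c*u)^2/(2+c*u) + (c*u)^2/2 \<le> G (c*u)" unfolding G_def using G_lower[of "c*u"] cu u by simp
  have B: "G u \<le> u^2/(2-u) + u^2/2" unfolding G_def using G_upper[of u] u by simp
  have Bpos: "G u > 0" using G_lower[of u] u unfolding G_def
    by (smt (verit) divide_pos_pos zero_less_power)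
  have L: "1/(2+u) \<le> 1/(2+c*u)" using cu by (intro divide_left_mono) auto
  have key: "(1/(2+u) + 1/2) \<ge> (1 - u/2) * (1/(2-u) + 1/2)"
  proof -
    have e1: "(1 - u/2) * (1/(2-u) + 1/2) = (4-u)/4" using u by (simp add: field_simps)
    have e2: "(4-u)/4 \<le> (4+u)/(2*(2+u))" using u by (simp add: field_simps power2_eq_square)
    have e3: "1/(2+u) + 1/2 = (4+u)/(2*(2+u))" using u by (simp add: field_simps)
    show ?thesis unfolding e1 e3 using e2 .
  qed
  have "(c^2 * (1 - u/2)) * G u \<le> (c^2 * (1 - u/2)) * (u^2/(2-u) + u^2/2)"
    using B u by (intro mult_left_mono) auto
  also have "\<dots> = c^2 * u^2 * ((1 - u/2) * (1/(2-u) + 1/2))"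
    using u by (simp add: field_simps)
  also have "\<dots> \<le> c^2 * u^2 * (1/(2+u) + 1/2)"
    using key by (intro mult_left_mono) auto
  also have "\<dots> \<le> c^2 * u^2 * (1/(2+c*u) + 1/2)"
    using L by (intro mult_left_mono) auto
  also have "\<dots> \<le> G (c*u)"
    using A by (simp add: power_mult_distrib field_simps)
  finally have main: "(c^2 * (1 - u/2)) * G u \<le> G (c*u)" .
  have "(1-2*p)^2 * (1 - u/2) \<le> (G (c*u)/2) / (G u/2)"
    using main Bpos unfolding c_def by (simp add: pos_le_divide_eq)
  then show ?thesis using dP dQ fPQ Bpos unfolding klPQ[symmetric] klo[symmetric]
    by (intro exI[of _ P] exI[of _ Q]) (auto simp: klPQ)
qed

definition mt :: "(nat \<Rightarrow> bool \<Rightarrow> real) \<Rightarrow> nat \<Rightarrow> bool \<Rightarrow> real" where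
  "mt J a b = (if J a b = 0 then 0 else J a b * ln (J a b / ((J a False + J a True) * (J 0 b + J 1 b))))"

lemma mi2: "mutual_info {..<2} UNIV J = mt J 0 False + mt J 0 True + mt J 1 False + mt J 1 True"
proof -
  have "{..<2::nat} = {0,1}" by auto
  then show ?thesis unfolding mutual_info_def mt_def sum_bool by simp
qed

definition JJ :: "real \<Rightarrow> nat \<Rightarrow> bool \<Rightarrow> real" where
  "JJ e u x = (if u = 0 \<and> x then 1 - e else if u = 1 \<and> \<not> x then e else 0)"

lemma JJ_joint: "0 \<le> e \<Longrightarrow> e \<le> 1 \<Longrightarrow> is_joint_UX 2 (JJ e)"
proof -
  assume e: "0 \<le> e" "e \<le> 1"
  have "{..<2::nat} = {0,1}" by auto
  then show ?thesis unfolding is_joint_UX_def JJ_def sum_bool using e by auto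
qed

lemma jZ: "joint_UY (Zch q) (JJ e) 0 False = (1-e)*q" "joint_UY (Zch q) (JJ e) 0 True = (1-e)*(1-q)"
  "joint_UY (Zch q) (JJ e) 1 False = e" "joint_UY (Zch q) (JJ e) 1 True = 0"
  unfolding joint_UY_def sum_bool JJ_def Zch_def by auto

lemma jB: "joint_UY (BSC p) (JJ e) 0 False = (1-e)*p" "joint_UY (BSC p) (JJ e) 0 True = (1-e)*(1-p)"
  "joint_UY (BSC p) (JJ e) 1 False = e*(1-p)" "joint_UY (BSC p) (JJ e) 1 True = e*p"
  unfolding joint_UY_def sum_bool JJ_def BSC_def by auto

definition GZ :: "real \<Rightarrow> real \<Rightarrow> real" where
  "GZ q e = (1-e)*q*(ln q - ln ((1-e)*q + e)) + (1-e)*(1-q)*(- ln (1-e)) + e*(- ln ((1-e)*q + e))"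

definition GB :: "real \<Rightarrow> real \<Rightarrow> real" where
  "GB p e = (1-e)*p*(ln p - ln ((1-e)*p + e*(1-p))) + (1-e)*(1-p)*(ln (1-p) - ln ((1-e)*(1-p) + e*p))
     + e*(1-p)*(ln (1-p) - ln ((1-e)*p + e*(1-p))) + e*p*(ln p - ln ((1-e)*(1-p) + e*p))"

lemma miZ:
  assumes q: "0 < q" "q < 1" and e: "0 < e" "e < 1"
  shows "mutual_info {..<2} UNIV (joint_UY (Zch q) (JJ e)) = GZ q e"
proof -
  define c where "c = (1-e)*q + e"
  have c: "c > 0" unfolding c_def using q e by (simp add: add_pos_pos)
  have t1: "mt (joint_UY (Zch q) (JJ e)) 0 False = (1-e)*q*(ln q - ln c)"
  proof -
    have "(1-e)*q / (((1-e)*q + (1-e)*(1-q)) * c) = q / c"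
      using e q c by (simp add: field_simps)
    then show ?thesis unfolding mt_def jZ c_def[symmetric] using e q c by (simp add: ln_div)
  qed
  have t2: "mt (joint_UY (Zch q) (JJ e)) 0 True = (1-e)*(1-q)*(- ln (1-e))"
  proof -
    have r0: "(1-e)*q + (1-e)*(1-q) = 1-e" by (simp add: algebra_simps)
    have "(1-e)*(1-q) / ((1-e) * ((1-e)*(1-q) + 0)) = 1 / (1-e)"
      using e q by simp
    moreover have "ln (1/(1-e)) = - ln (1-e)" using e by (simp add: ln_div)
    moreover have "(1-e)*(1-q) \<noteq> 0" using e q by simp
    ultimately show ?thesis unfolding mt_def jZ r0 by simp
  qed
  have t3: "mt (joint_UY (Zch q) (JJ e)) 1 False = e*(- ln c)"
  proof -
    have "e / ((e + 0) * c) = 1 / c" using e c by (simp add: field_simps)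
    then show ?thesis unfolding mt_def jZ c_def[symmetric] using e c by (simp add: ln_div)
  qed
  have t4: "mt (joint_UY (Zch q) (JJ e)) 1 True = 0" unfolding mt_def jZ by simp
  show ?thesis unfolding mi2 t1 t2 t3 t4 GZ_def c_def by simp
qed

lemma miB:
  assumes p: "0 < p" "p < 1" and e: "0 < e" "e < 1"
  shows "mutual_info {..<2} UNIV (joint_UY (BSC p) (JJ e)) = GB p e"
proof -
  define c where "c = (1-e)*p + e*(1-p)"
  define d where "d = (1-e)*(1-p) + e*p"
  have c: "c > 0" unfolding c_def using p e by (simp add: add_pos_pos)
  have d: "d > 0" unfolding d_def using p e by (simp add: add_pos_pos)
  have r0: "(1-e)*p + (1-e)*(1-p) = 1-e" by (simp add: algebra_simps)
  have r1: "e*(1-p) + e*p = e" by (simp add: algebra_simps)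
  have t1: "mt (joint_UY (BSC p) (JJ e)) 0 False = (1-e)*p*(ln p - ln c)"
  proof -
    have "(1-e)*p / ((1-e) * c) = p / c" using e by simp
    then show ?thesis unfolding mt_def jB r0 c_def[symmetric] using e p c by (simp add: ln_div)
  qed
  have t2: "mt (joint_UY (BSC p) (JJ e)) 0 True = (1-e)*(1-p)*(ln (1-p) - ln d)"
  proof -
    have "(1-e)*(1-p) / ((1-e) * d) = (1-p) / d" using e by simp
    then show ?thesis unfolding mt_def jB r0 d_def[symmetric] using e p d by (simp add: ln_div)
  qed
  have t3: "mt (joint_UY (BSC p) (JJ e)) 1 False = e*(1-p)*(ln (1-p) - ln c)"
  proof -
    have "e*(1-p) / (e * c) = (1-p) / c" using e by simp
    then show ?thesis unfolding mt_def jB r1 c_def[symmetric] using e p c by (simp add: ln_div)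
  qed
  have t4: "mt (joint_UY (BSC p) (JJ e)) 1 True = e*p*(ln p - ln d)"
  proof -
    have "e*p / (e * d) = p / d" using e by simp
    then show ?thesis unfolding mt_def jB r1 d_def[symmetric] using e p d by (simp add: ln_div)
  qed
  show ?thesis unfolding mi2 t1 t2 t3 t4 GB_def c_def d_def by simp
qed


lemma F_deriv:
  assumes p: "0 < p" "p < 1" and q: "0 < q" "q < 1"
  shows "DERIV (\<lambda>e. GB p e - GZ q e) 0 :> (1-2*p)*(ln (1-p) - ln p) + ln q"
  unfolding GB_def[abs_def] GZ_def[abs_def] using p q
  apply -
  apply (rule derivative_eq_intros refl | simp)+
  apply (simp add: algebra_simps)
  done

lemma F_deriv_pos:
  fixes p :: real
  assumes p: "0 < p" "p < 1/2"
  shows "(1-2*p)*(ln (1-p) - ln p) + ln (4*p*(1-p)) > 0"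
proof -
  have a: "ln (1/(2*p)) < 1/(2*p) - 1"
  proof -
    have pos: "0 < 1/(2*p)" using p by simp
    have ne: "1/(2*p) \<noteq> 1" using p by (simp add: field_simps)
    show ?thesis using ln_le_minus_one[OF pos] ln_eq_minus_one[OF pos] ne by linarith
  qed
  have b: "ln (1/(2*(1-p))) \<le> 1/(2*(1-p)) - 1" using p by (intro ln_le_minus_one) auto
  have "p * ln (1/(2*p)) + (1-p) * ln (1/(2*(1-p))) < p * (1/(2*p) - 1) + (1-p)*(1/(2*(1-p)) - 1)"
    using a b p by (intro add_less_le_mono mult_strict_left_mono mult_left_mono) auto
  also have "\<dots> = 0" using p by (simp add: field_simps)
  finally have c: "p * ln (1/(2*p)) + (1-p) * ln (1/(2*(1-p))) < 0" .
  have l1: "ln (1/(2*p)) = - ln 2 - ln p" using p by (simp add: ln_div ln_mult)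
  have l2: "ln (1/(2*(1-p))) = - ln 2 - ln (1-p)"
  proof -
    have "ln (1/(2*(1-p))) = ln 1 - ln (2*(1-p))" using p by (intro ln_divide_pos) auto
    also have "ln (2*(1-p)) = ln 2 + ln (1-p)" using p by (intro ln_mult_pos) auto
    finally show ?thesis by simp
  qed
  have l3: "ln (4*p*(1-p)) = 2 * ln 2 + ln p + ln (1-p)"
  proof -
    have "ln (4*p*(1-p)) = ln 4 + ln p + ln (1-p)" using p by (simp add: ln_mult)
    moreover have "ln (4::real) = 2 * ln 2"
      using ln_realpow[of 2 2] by simp
    ultimately show ?thesis by simp
  qed
  have "(1-2*p)*(ln (1-p) - ln p) + ln (4*p*(1-p)) = -2 * (p * ln (1/(2*p)) + (1-p) * ln (1/(2*(1-p))))"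
    unfolding l1 l2 l3 by (simp add: algebra_simps)
  then show ?thesis using c by simp
qed


lemma F0: "GB p 0 - GZ q 0 = 0"
  unfolding GB_def GZ_def by simp

theorem mainTheorem9:
  fixes p q :: real
  assumes "0 < p" and "p < 1/2" and "q = 4 * p * (1 - p)"
  shows "eta_KL (Zch q) = (1 - 2*p)^2 \<and> eta_KL (BSC p) = (1 - 2*p)^2
         \<and> \<not> less_noisy (Zch q) (BSC p)"
proof -
  have p: "0 < p" "p < 1/2" using assms by auto
  have qc: "1 - q = (1-2*p)^2" using assms by (simp add: power2_eq_square algebra_simps)
  have q: "0 < q" "q < 1"
  proof -
    show "0 < q" using assms by simp
    have "(1-2*p)^2 > 0" using p by simp
    then show "q < 1" using qc by linarith
  qed
  have c2: "(1-2*p)^2 \<le> 1" using p by (simp add: power_le_one abs_le_iff)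
  have Z: "eta_KL (Zch q) = (1 - 2*p)^2"
    unfolding eta_KL_def qc[symmetric]
  proof (rule sup_eq)
    fix x assume "x \<in> {kl (outd (Zch q) P) (outd (Zch q) Q) / kl P Q | P Q.
      is_dist P \<and> is_dist Q \<and> kl_finite P Q \<and> kl P Q > 0}"
    then obtain P Q where PQ: "is_dist P" "is_dist Q" "kl_finite P Q" "kl P Q > 0"
      and x: "x = kl (outd (Zch q) P) (outd (Zch q) Q) / kl P Q" by blast
    show "x \<le> 1 - q" unfolding x using Z_upper[OF q PQ(1-3)] PQ(4) by (simp add: divide_le_eq)
  next
    fix e :: real assume e: "e > 0"
    have lq: "q * ln q \<le> 0" using q by (simp add: mult_nonneg_nonpos)
    define N where "N = - (q * ln q) / e + 1"
    have N: "N > 0" unfolding N_def using lq e by (simp add: add_pos_nonneg)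
    obtain P Q where PQ: "is_dist P" "is_dist Q" "kl_finite P Q" "kl P Q > 0"
      and x: "(1-q) + q * ln q / N \<le> kl (outd (Zch q) P) (outd (Zch q) Q) / kl P Q"
      using Z_lower[OF q N] by blast
    have "- e * N < q * ln q" unfolding N_def using e by (simp add: field_simps)
    then have "- e < q * ln q / N" using N by (simp add: field_simps)
    then show "\<exists>x\<in>{kl (outd (Zch q) P) (outd (Zch q) Q) / kl P Q | P Q.
      is_dist P \<and> is_dist Q \<and> kl_finite P Q \<and> kl P Q > 0}. 1 - q - e < x"
      using PQ x by fastforce
  qed
  have B: "eta_KL (BSC p) = (1 - 2*p)^2"
    unfolding eta_KL_def
  proof (rule sup_eq)
    fix x assume "x \<in> {kl (outd (BSC p) P) (outd (BSC p) Q) / kl P Q | P Q.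
      is_dist P \<and> is_dist Q \<and> kl_finite P Q \<and> kl P Q > 0}"
    then obtain P Q where PQ: "is_dist P" "is_dist Q" "kl_finite P Q" "kl P Q > 0"
      and x: "x = kl (outd (BSC p) P) (outd (BSC p) Q) / kl P Q" by blast
    show "x \<le> (1-2*p)^2" unfolding x using BSC_upper[OF p PQ] PQ(4) by (simp add: divide_le_eq)
  next
    fix e :: real assume e: "e > 0"
    define u where "u = min (1/2) e"
    have u: "0 < u" "u < 1" "u \<le> e" using e by (auto simp: u_def)
    obtain P Q where PQ: "is_dist P" "is_dist Q" "kl_finite P Q" "kl P Q > 0"
      and x: "(1-2*p)^2 * (1 - u/2) \<le> kl (outd (BSC p) P) (outd (BSC p) Q) / kl P Q"
      using BSC_lower[OF p u(1,2)] by blast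
    have "(1-2*p)^2 * (u/2) \<le> u/2" using c2 u by (simp add: mult_left_le_one_le)
    moreover have "(1-2*p)^2 * (1 - u/2) = (1-2*p)^2 - (1-2*p)^2 * (u/2)" by (simp add: algebra_simps)
    ultimately have "(1-2*p)^2 - e < (1-2*p)^2 * (1 - u/2)" using u e by linarith
    then show "\<exists>x\<in>{kl (outd (BSC p) P) (outd (BSC p) Q) / kl P Q | P Q.
      is_dist P \<and> is_dist Q \<and> kl_finite P Q \<and> kl P Q > 0}. (1-2*p)^2 - e < x"
      using PQ x by fastforce
  qed
  have N: "\<not> less_noisy (Zch q) (BSC p)"
  proof
    assume ln: "less_noisy (Zch q) (BSC p)"
    have p1: "0 < p" "p < 1" using p by auto
    have der: "DERIV (\<lambda>e. GB p e - GZ q e) 0 :> (1-2*p)*(ln (1-p) - ln p) + ln q"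
      by (rule F_deriv[OF p1 q])
    have pos: "(1-2*p)*(ln (1-p) - ln p) + ln q > 0" using F_deriv_pos[OF p] assms(3) by simp
    obtain d where d: "d > 0" "\<And>h. h > 0 \<Longrightarrow> h < d \<Longrightarrow> GB p 0 - GZ q 0 < GB p (0+h) - GZ q (0+h)"
      using DERIV_pos_inc_right[OF der pos] by auto
    define h where "h = min (d/2) (1/2)"
    have h: "0 < h" "h < d" "h < 1" using d by (auto simp: h_def)
    have "GZ q h < GB p h" using d(2)[OF h(1,2)] F0[of p q] by simp
    moreover have "mutual_info {..<2} UNIV (joint_UY (Zch q) (JJ h)) \<ge> mutual_info {..<2} UNIV (joint_UY (BSC p) (JJ h))"
      using ln JJ_joint[of h] h unfolding less_noisy_def by auto
    ultimately show False using miZ[OF q h(1,3)] miB[OF p1 h(1,3)] by simp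
  qed
  show ?thesis using Z B N by blast
qed

end
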